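(* Let $S$ and $T$ be semigroups. If $S\times T$ is finitely right equated, then so are $S$ and $T$.
   Context: For a semigroup $S$ and $a\in S$, $\mathbf{r}_S(a)=\{(s,t)\in S\times S\mid as=at\}$; $S$ is finitely right equated if each $\mathbf{r}_S(a)$ is finitely generated as a right congruence. *)

theory Defs
  imports Main
begin

text \<open>A semigroup is modelled as a (nonempty) type with an associative
binary operation \<open>mult\<close>; its carrier is the whole type.\<close>

definition is_semigroup :: "('a \<Rightarrow> 'a \<Rightarrow> 'a) \<Rightarrow> bool" where
  "is_semigroup mult \<longleftrightarrow> (\<forall>x y z. mult (mult x y) z = mult x (mult y z))"

definition prod_mult :: "('a \<Rightarrow> 'a \<Rightarrow> 'a) \<Rightarrow> ('b \<Rightarrow> 'b \<Rightarrow> 'b)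
    \<Rightarrow> ('a \<times> 'b) \<Rightarrow> ('a \<times> 'b) \<Rightarrow> ('a \<times> 'b)" where
  "prod_mult m1 m2 p q = (m1 (fst p) (fst q), m2 (snd p) (snd q))"

definition right_congruence :: "('a \<Rightarrow> 'a \<Rightarrow> 'a) \<Rightarrow> ('a \<times> 'a) set \<Rightarrow> bool" where
  "right_congruence mult \<rho> \<longleftrightarrow>
     equiv UNIV \<rho> \<and> (\<forall>s t u. (s, t) \<in> \<rho> \<longrightarrow> (mult s u, mult t u) \<in> \<rho>)"

definition right_cong_gen :: "('a \<Rightarrow> 'a \<Rightarrow> 'a) \<Rightarrow> ('a \<times> 'a) set \<Rightarrow> ('a \<times> 'a) set" where
  "right_cong_gen mult X = \<Inter>{\<rho>. right_congruence mult \<rho> \<and> X \<subseteq> \<rho>}"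

definition fg_right_congruence :: "('a \<Rightarrow> 'a \<Rightarrow> 'a) \<Rightarrow> ('a \<times> 'a) set \<Rightarrow> bool" where
  "fg_right_congruence mult \<rho> \<longleftrightarrow> (\<exists>X. finite X \<and> \<rho> = right_cong_gen mult X)"

definition r_ann :: "('a \<Rightarrow> 'a \<Rightarrow> 'a) \<Rightarrow> 'a \<Rightarrow> ('a \<times> 'a) set" where
  "r_ann mult a = {(s, t). mult a s = mult a t}"

definition fin_right_equated :: "('a \<Rightarrow> 'a \<Rightarrow> 'a) \<Rightarrow> bool" where
  "fin_right_equated mult \<longleftrightarrow> (\<forall>a. fg_right_congruence mult (r_ann mult a))"

end

theory Submission
  imports Defs
begin
lemma rc_iff: "right_congruence m \<rho> \<longleftrightarrow> (\<forall>x. (x,x) \<in> \<rho>) \<and> (\<forall>x y. (x,y) \<in> \<rho> \<longrightarrow> (y,x) \<in> \<rho>)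
     \<and> (\<forall>x y z. (x,y) \<in> \<rho> \<longrightarrow> (y,z) \<in> \<rho> \<longrightarrow> (x,z) \<in> \<rho>)
     \<and> (\<forall>s t u. (s, t) \<in> \<rho> \<longrightarrow> (m s u, m t u) \<in> \<rho>)"
  unfolding right_congruence_def equiv_def refl_on_def sym_on_def trans_on_def by auto

lemma inter_rc:
  assumes H: "\<And>\<rho>. \<rho> \<in> F \<Longrightarrow> right_congruence m \<rho>"
  shows "right_congruence m (\<Inter>F)"
  unfolding rc_iff
proof (intro conjI allI impI)
  fix x show "(x,x) \<in> \<Inter>F"
  proof (rule InterI)
    fix \<rho> assume "\<rho> \<in> F" thus "(x,x) \<in> \<rho>" using H[of \<rho>] unfolding rc_iff by blast
  qed
next
  fix x y assume a: "(x,y) \<in> \<Inter>F" show "(y,x) \<in> \<Inter>F"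
  proof (rule InterI)
    fix \<rho> assume r: "\<rho> \<in> F" hence "(x,y) \<in> \<rho>" using a by blast
    thus "(y,x) \<in> \<rho>" using H[OF r] unfolding rc_iff by blast
  qed
next
  fix x y z assume a: "(x,y) \<in> \<Inter>F" and b: "(y,z) \<in> \<Inter>F" show "(x,z) \<in> \<Inter>F"
  proof (rule InterI)
    fix \<rho> assume r: "\<rho> \<in> F" hence "(x,y) \<in> \<rho>" "(y,z) \<in> \<rho>" using a b by blast+
    thus "(x,z) \<in> \<rho>" using H[OF r] unfolding rc_iff by blast
  qed
next
  fix s t u assume a: "(s,t) \<in> \<Inter>F" show "(m s u, m t u) \<in> \<Inter>F"
  proof (rule InterI)
    fix \<rho> assume r: "\<rho> \<in> F" hence "(s,t) \<in> \<rho>" using a by blast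
    thus "(m s u, m t u) \<in> \<rho>" using H[OF r] unfolding rc_iff by blast
  qed
qed

lemma gen_rc: "right_congruence m (right_cong_gen m X)"
  unfolding right_cong_gen_def by (rule inter_rc) simp

lemma r_ann_rc: "is_semigroup m \<Longrightarrow> right_congruence m (r_ann m a)"
  unfolding rc_iff r_ann_def is_semigroup_def by (simp, metis)

lemma gen_least: "right_congruence m \<rho> \<Longrightarrow> X \<subseteq> \<rho> \<Longrightarrow> right_cong_gen m X \<subseteq> \<rho>"
  unfolding right_cong_gen_def by blast

lemma gen_incl: "X \<subseteq> right_cong_gen m X"
  unfolding right_cong_gen_def by blast

lemma pull_gen:
  assumes "right_congruence m1 \<rho>"
    and hom: "\<And>p q. f (M p q) = m1 (f p) (f q)"
  shows "right_congruence M {(p,q). (f p, f q) \<in> \<rho>}"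
proof -
  from assms(1) have r: "\<And>x. (x,x) \<in> \<rho>" and s: "\<And>x y. (x,y) \<in> \<rho> \<Longrightarrow> (y,x) \<in> \<rho>"
    and t: "\<And>x y z. (x,y) \<in> \<rho> \<Longrightarrow> (y,z) \<in> \<rho> \<Longrightarrow> (x,z) \<in> \<rho>"
    and c: "\<And>s t u. (s,t) \<in> \<rho> \<Longrightarrow> (m1 s u, m1 t u) \<in> \<rho>"
    unfolding rc_iff by blast+
  show ?thesis unfolding rc_iff
  proof (intro conjI allI impI)
    fix x show "(x,x) \<in> {(p,q). (f p, f q) \<in> \<rho>}" using r by simp
  next
    fix x y assume "(x,y) \<in> {(p,q). (f p, f q) \<in> \<rho>}"
    thus "(y,x) \<in> {(p,q). (f p, f q) \<in> \<rho>}" using s by simp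
  next
    fix x y z assume "(x,y) \<in> {(p,q). (f p, f q) \<in> \<rho>}" "(y,z) \<in> {(p,q). (f p, f q) \<in> \<rho>}"
    thus "(x,z) \<in> {(p,q). (f p, f q) \<in> \<rho>}" using t by simp
  next
    fix x y u assume "(x,y) \<in> {(p,q). (f p, f q) \<in> \<rho>}"
    thus "(M x u, M y u) \<in> {(p,q). (f p, f q) \<in> \<rho>}" using c by (simp add: hom)
  qed
qed

lemma pull_rc:
  assumes "right_congruence m1 \<rho>"
  shows "right_congruence (prod_mult m1 m2) {(p,q). (fst p, fst q) \<in> \<rho>}"
  by (rule pull_gen[OF assms]) (simp add: prod_mult_def)

lemma pull_rc2:
  assumes "right_congruence m2 \<rho>"
  shows "right_congruence (prod_mult m1 m2) {(p,q). (snd p, snd q) \<in> \<rho>}"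
  by (rule pull_gen[OF assms]) (simp add: prod_mult_def)
lemma left_part:
  fixes m1 :: "'a \<Rightarrow> 'a \<Rightarrow> 'a" and m2 :: "'b \<Rightarrow> 'b \<Rightarrow> 'b"
  assumes s1: "is_semigroup m1"
    and fre: "fin_right_equated (prod_mult m1 m2)"
  shows "fin_right_equated m1"
  unfolding fin_right_equated_def fg_right_congruence_def
proof
  fix a
  obtain b :: 'b where True by simp
  from fre obtain X where fX: "finite X" and eq: "r_ann (prod_mult m1 m2) (a,b) = right_cong_gen (prod_mult m1 m2) X"
    unfolding fin_right_equated_def fg_right_congruence_def by blast
  define X1 where "X1 = (\<lambda>(p,q). (fst p, fst q)) ` X"
  have "finite X1" using fX by (simp add: X1_def)
  moreover have "r_ann m1 a = right_cong_gen m1 X1"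
  proof
    have "X1 \<subseteq> r_ann m1 a"
    proof
      fix z assume "z \<in> X1"
      then obtain p q where pq: "(p,q) \<in> X" "z = (fst p, fst q)" by (auto simp: X1_def)
      hence "(p,q) \<in> r_ann (prod_mult m1 m2) (a,b)" unfolding eq using gen_incl[of X] by blast
      thus "z \<in> r_ann m1 a" using pq by (auto simp: r_ann_def prod_mult_def)
    qed
    thus "right_cong_gen m1 X1 \<subseteq> r_ann m1 a" by (rule gen_least[OF r_ann_rc[OF s1]])
  next
    have "X \<subseteq> {(p,q). (fst p, fst q) \<in> right_cong_gen m1 X1}"
    proof
      fix z assume "z \<in> X"
      then obtain p q where pq: "z = (p,q)" "(p,q) \<in> X" by (cases z) auto
      hence "(fst p, fst q) \<in> X1" unfolding X1_def by force
      thus "z \<in> {(p,q). (fst p, fst q) \<in> right_cong_gen m1 X1}" using gen_incl[of X1 m1] pq by blast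
    qed
    hence sub: "right_cong_gen (prod_mult m1 m2) X \<subseteq> {(p,q). (fst p, fst q) \<in> right_cong_gen m1 X1}"
      by (rule gen_least[OF pull_rc[OF gen_rc]])
    show "r_ann m1 a \<subseteq> right_cong_gen m1 X1"
    proof
      fix z assume z: "z \<in> r_ann m1 a"
      obtain s s' where zs: "z = (s,s')" by (cases z)
      have "((s,b),(s',b)) \<in> r_ann (prod_mult m1 m2) (a,b)"
        using z zs by (simp add: r_ann_def prod_mult_def)
      hence "((s,b),(s',b)) \<in> right_cong_gen (prod_mult m1 m2) X" using eq by simp
      thus "z \<in> right_cong_gen m1 X1" using sub zs by auto
    qed
  qed
  ultimately show "\<exists>X. finite X \<and> r_ann m1 a = right_cong_gen m1 X" by blast
qed

lemma right_part:
  fixes m1 :: "'a \<Rightarrow> 'a \<Rightarrow> 'a" and m2 :: "'b \<Rightarrow> 'b \<Rightarrow> 'b"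
  assumes s2: "is_semigroup m2"
    and fre: "fin_right_equated (prod_mult m1 m2)"
  shows "fin_right_equated m2"
  unfolding fin_right_equated_def fg_right_congruence_def
proof
  fix a
  obtain b :: 'a where True by simp
  from fre obtain X where fX: "finite X" and eq: "r_ann (prod_mult m1 m2) (b,a) = right_cong_gen (prod_mult m1 m2) X"
    unfolding fin_right_equated_def fg_right_congruence_def by blast
  define X1 where "X1 = (\<lambda>(p,q). (snd p, snd q)) ` X"
  have "finite X1" using fX by (simp add: X1_def)
  moreover have "r_ann m2 a = right_cong_gen m2 X1"
  proof
    have "X1 \<subseteq> r_ann m2 a"
    proof
      fix z assume "z \<in> X1"
      then obtain p q where pq: "(p,q) \<in> X" "z = (snd p, snd q)" by (auto simp: X1_def)
      hence "(p,q) \<in> r_ann (prod_mult m1 m2) (b,a)" unfolding eq using gen_incl[of X] by blast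
      thus "z \<in> r_ann m2 a" using pq by (auto simp: r_ann_def prod_mult_def)
    qed
    thus "right_cong_gen m2 X1 \<subseteq> r_ann m2 a" by (rule gen_least[OF r_ann_rc[OF s2]])
  next
    have "X \<subseteq> {(p,q). (snd p, snd q) \<in> right_cong_gen m2 X1}"
    proof
      fix z assume "z \<in> X"
      then obtain p q where pq: "z = (p,q)" "(p,q) \<in> X" by (cases z) auto
      hence "(snd p, snd q) \<in> X1" unfolding X1_def by force
      thus "z \<in> {(p,q). (snd p, snd q) \<in> right_cong_gen m2 X1}" using gen_incl[of X1 m2] pq by blast
    qed
    hence sub: "right_cong_gen (prod_mult m1 m2) X \<subseteq> {(p,q). (snd p, snd q) \<in> right_cong_gen m2 X1}"
      by (rule gen_least[OF pull_rc2[OF gen_rc]])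
    show "r_ann m2 a \<subseteq> right_cong_gen m2 X1"
    proof
      fix z assume z: "z \<in> r_ann m2 a"
      obtain s s' where zs: "z = (s,s')" by (cases z)
      have "((b,s),(b,s')) \<in> r_ann (prod_mult m1 m2) (b,a)"
        using z zs by (simp add: r_ann_def prod_mult_def)
      hence "((b,s),(b,s')) \<in> right_cong_gen (prod_mult m1 m2) X" using eq by simp
      thus "z \<in> right_cong_gen m2 X1" using sub zs by auto
    qed
  qed
  ultimately show "\<exists>X. finite X \<and> r_ann m2 a = right_cong_gen m2 X" by blast
qed

theorem mainTheorem17:
  fixes m1 :: "'a \<Rightarrow> 'a \<Rightarrow> 'a" and m2 :: "'b \<Rightarrow> 'b \<Rightarrow> 'b"
  assumes "is_semigroup m1" and "is_semigroup m2"
    and "fin_right_equated (prod_mult m1 m2)"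
  shows "fin_right_equated m1 \<and> fin_right_equated m2"
  using assms left_part right_part by blast

end
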